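(* Let $P$ be a $3$-dimensional subspace of $\mathbb{R}^7$. Then the $3$-dimensional subspaces $\Lambda^2(P)$ and $\Psi(P)$ of $\Lambda^2(\mathbb{R}^7)$ are orthogonal to each other.
   Context: Equip $\mathbb{R}^7$ with its standard inner product, orientation and basis $e_1,\dots,e_7$. Let $\varphi = e_{123} - e_{167} - e_{527} - e_{563} - e_{415} - e_{426} - e_{437}$ ($e_{ijk} = e_i\wedge e_j\wedge e_k$) and $\psi = \star\varphi = e_{4567} - e_{4523} - e_{4163} - e_{4127} - e_{2637} - e_{1537} - e_{1526}$. For $u,v$: $u\wedge v$ is the 2-form $(a,b)\mapsto \langle u,a\rangle\langle v,b\rangle - \langle u,b\rangle\langle v,a\rangle$ and $\Psi_{uv}$ is the 2-form $(a,b)\mapsto\psi(u,v,a,b)$. $\Lambda^2(P) = \mathrm{Span}\{u\wedge v: u,v\in P\}$, $\Psi(P) = \mathrm{Span}\{\Psi_{uv} : u,v\in P\}$. The inner product on $\Lambda^2$ is $\langle X,Y\rangle = \sum_{i,j} X(e_i,e_j)Y(e_i,e_j)$. *)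

theory Defs
  imports "HOL-Analysis.Analysis" "HOL-Library.Function_Algebras"
begin

type_synonym vec7 = "real ^ 7"
type_synonym form2 = "vec7 \<Rightarrow> vec7 \<Rightarrow> real"

text \<open>Standard basis e_1,...,e_7 of R^7; e_k is the k-th coordinate vector
  (index k-1 of the finite index type 7, whose elements are 0,...,6).\<close>
definition idx7 :: "nat \<Rightarrow> 7" where "idx7 k = of_nat (k - 1)"

definition ebasis :: "nat \<Rightarrow> vec7" where "ebasis k = axis (idx7 k) 1"

text \<open>Coordinate dual 4-form e_i ^ e_j ^ e_k ^ e_l (determinant of the 4x4 matrix
  of the relevant coordinates).\<close>
definition e4 :: "nat \<Rightarrow> nat \<Rightarrow> nat \<Rightarrow> nat \<Rightarrow> vec7 \<Rightarrow> vec7 \<Rightarrow> vec7 \<Rightarrow> vec7 \<Rightarrow> real" where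
  "e4 i j k l a b c d =
     (\<Sum>p | p permutes {0..<4}.
        of_int (sign p) * (\<Prod>r<4. ([a, b, c, d] ! p r) $ idx7 ([i, j, k, l] ! r)))"

text \<open>psi = star phi = e4567 - e4523 - e4163 - e4127 - e2637 - e1537 - e1526\<close>
definition psi :: "vec7 \<Rightarrow> vec7 \<Rightarrow> vec7 \<Rightarrow> vec7 \<Rightarrow> real" where
  "psi a b c d =
      e4 4 5 6 7 a b c d - e4 4 5 2 3 a b c d - e4 4 1 6 3 a b c d - e4 4 1 2 7 a b c d
    - e4 2 6 3 7 a b c d - e4 1 5 3 7 a b c d - e4 1 5 2 6 a b c d"

definition wedge2 :: "vec7 \<Rightarrow> vec7 \<Rightarrow> form2" where
  "wedge2 u v = (\<lambda>a b. (u \<bullet> a) * (v \<bullet> b) - (u \<bullet> b) * (v \<bullet> a))"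

definition Psi2 :: "vec7 \<Rightarrow> vec7 \<Rightarrow> form2" where
  "Psi2 u v = (\<lambda>a b. psi u v a b)"

definition scale2 :: "real \<Rightarrow> form2 \<Rightarrow> form2" where
  "scale2 r X = (\<lambda>a b. r * X a b)"

definition Lambda2 :: "vec7 set \<Rightarrow> form2 set" where
  "Lambda2 P = module.span scale2 {wedge2 u v | u v. u \<in> P \<and> v \<in> P}"

definition PsiSpan :: "vec7 set \<Rightarrow> form2 set" where
  "PsiSpan P = module.span scale2 {Psi2 u v | u v. u \<in> P \<and> v \<in> P}"

definition inner2 :: "form2 \<Rightarrow> form2 \<Rightarrow> real" where
  "inner2 X Y = (\<Sum>i\<in>{1..7}. \<Sum>j\<in>{1..7}. X (ebasis i) (ebasis j) * Y (ebasis i) (ebasis j))"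

end

theory Submission
  imports Defs Jordan_Normal_Form.Determinant
begin

lemma UNIV7: "(UNIV::7 set) = {0,1,2,3,4,5,6}"
proof -
  { fix x :: 7
    obtain z where z: "x = of_int z" "0 \<le> z" "z < 7" by (cases x) auto
    then have "z = 0 \<or> z = 1 \<or> z = 2 \<or> z = 3 \<or> z = 4 \<or> z = 5 \<or> z = 6" by auto
    then have "x \<in> {0,1,2,3,4,5,6}" using z by auto }
  then show ?thesis by auto
qed

lemma set17: "{1..7::nat} = {1,2,3,4,5,6,7}"
  by (rule Set.set_eqI) (simp only: atLeastAtMost_iff insert_iff empty_iff, presburger)

lemma sum7: "(\<Sum>j\<in>{1..7::nat}. f (idx7 j)) = (\<Sum>t\<in>(UNIV::7 set). f t)"
proof -
  have "(\<Sum>j\<in>{1..7::nat}. f (idx7 j)) = f 0 + f 1 + f 2 + f 3 + f 4 + f 5 + f 6"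
    unfolding set17 by (simp add: idx7_def add.assoc)
  moreover have "(\<Sum>t\<in>(UNIV::7 set). f t) = f 0 + f 1 + f 2 + f 3 + f 4 + f 5 + f 6"
    unfolding UNIV7 by (simp add: add.assoc)
  ultimately show ?thesis by (simp only:)
qed

definition M4 :: "nat list \<Rightarrow> vec7 list \<Rightarrow> real Matrix.mat" where
  "M4 I V = Matrix.mat 4 4 (\<lambda>(r,s). vec_nth (V!s) (idx7 (I!r)))"

lemma e4_det: "e4 i j k l a b c d = Determinant.det (M4 [i,j,k,l] [a,b,c,d])"
proof -
  have "Determinant.det (M4 [i,j,k,l] [a,b,c,d]) =
     (\<Sum>p \<in> {p. p permutes {0 ..< 4}}. signof p * (\<Prod>r = 0 ..< 4. (M4 [i,j,k,l] [a,b,c,d]) $$ (r, p r)))"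
    by (rule det_def') (simp add: M4_def)
  also have "\<dots> = e4 i j k l a b c d"
    unfolding e4_def
  proof (rule sum.cong[OF refl])
    fix p assume "p \<in> {p. p permutes {0..<4::nat}}"
    then have pp: "p permutes {0..<4}" by simp
    have "(\<Prod>r = 0 ..< 4. (M4 [i,j,k,l] [a,b,c,d]) $$ (r, p r)) =
          (\<Prod>r<4. vec_nth ([a, b, c, d] ! p r) (idx7 ([i, j, k, l] ! r)))"
      unfolding atLeast0LessThan
    proof (rule prod.cong[OF refl])
      fix r assume "r \<in> {..<4::nat}"
      then have "p r < 4" using permutes_in_image[OF pp, of r] by auto
      then show "(M4 [i,j,k,l] [a,b,c,d]) $$ (r, p r) = vec_nth ([a, b, c, d] ! p r) (idx7 ([i, j, k, l] ! r))"
        using \<open>r \<in> _\<close> by (simp add: M4_def)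
    qed
    then show "signof p * (\<Prod>r = 0 ..< 4. (M4 [i,j,k,l] [a,b,c,d]) $$ (r, p r)) =
       of_int (sign p) * (\<Prod>r<4. vec_nth ([a, b, c, d] ! p r) (idx7 ([i, j, k, l] ! r)))"
      by simp
  qed
  finally show ?thesis by simp
qed


lemma dep4:
  fixes P :: "vec7 set"
  assumes P: "subspace P" "dim P = 3" and in4: "a \<in> P" "b \<in> P" "c \<in> P" "d \<in> P"
  shows "\<exists>cc. (\<exists>s<4. cc s \<noteq> 0) \<and> (\<Sum>s<4. cc s *\<^sub>R ([a,b,c,d]!s)) = 0"
proof (cases "distinct [a,b,c,d]")
  case True
  let ?S = "{a,b,c,d}"
  have cS: "card ?S = 4" using True by auto
  have "\<not> independent ?S"
  proof
    assume "independent ?S"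
    then have "card ?S \<le> dim P" using independent_card_le_dim[of ?S P] in4 by auto
    then show False using cS P by simp
  qed
  then obtain u where u: "\<exists>v\<in>?S. u v \<noteq> 0" "(\<Sum>v\<in>?S. u v *\<^sub>R v) = 0"
    using dependent_finite[of ?S] by auto
  show ?thesis
  proof (rule exI[of _ "\<lambda>s. u ([a,b,c,d]!s)"], intro conjI)
    show "\<exists>s<4. u ([a,b,c,d]!s) \<noteq> 0"
    proof -
      obtain v where "v \<in> ?S" "u v \<noteq> 0" using u by auto
      then show ?thesis
        apply (elim insertE)
        apply (rule exI[of _ 0]; simp)
        apply (rule exI[of _ 1]; simp)
        apply (rule exI[of _ 2]; simp)
        apply (rule exI[of _ 3]; simp)
        by simp
    qed
    show "(\<Sum>s<4. u ([a,b,c,d]!s) *\<^sub>R ([a,b,c,d]!s)) = 0"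
      using u(2) True by (simp add: numeral_eq_Suc lessThan_Suc add_ac)
  qed
next
  case False
  define e :: "nat \<Rightarrow> nat \<Rightarrow> nat \<Rightarrow> real" where "e s t x = (if x = s then 1 else if x = t then -1 else 0)" for s t x
  have key: "\<exists>cc. (\<exists>s<4. cc s \<noteq> 0) \<and> (\<Sum>s<4. cc s *\<^sub>R ([a,b,c,d]!s)) = 0"
    if "s < 4" "t < 4" "s \<noteq> t" "[a,b,c,d]!s = [a,b,c,d]!t" for s t
  proof (rule exI[of _ "e s t"], intro conjI)
    show "\<exists>s'<4. e s t s' \<noteq> 0" using that by (auto simp: e_def)
    have "s = 0 \<or> s = 1 \<or> s = 2 \<or> s = 3" "t = 0 \<or> t = 1 \<or> t = 2 \<or> t = 3" using that by auto
    then show "(\<Sum>s'<4. e s t s' *\<^sub>R ([a,b,c,d]!s')) = 0"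
      using that by (auto simp: e_def numeral_eq_Suc lessThan_Suc)
  qed
  from False have "a = b \<or> a = c \<or> a = d \<or> b = c \<or> b = d \<or> c = d" by auto
  then show ?thesis
    apply (elim disjE)
    apply (rule key[of 0 1]; simp)
    apply (rule key[of 0 2]; simp)
    apply (rule key[of 0 3]; simp)
    apply (rule key[of 1 2]; simp)
    apply (rule key[of 1 3]; simp)
    apply (rule key[of 2 3]; simp)
    done
qed

lemma e4_zero:
  fixes P :: "vec7 set"
  assumes P: "subspace P" "dim P = 3" and in4: "a \<in> P" "b \<in> P" "c \<in> P" "d \<in> P"
  shows "e4 i j k l a b c d = 0"
proof -
  obtain cc where cc: "\<exists>s<4. cc s \<noteq> 0" "(\<Sum>s<4. cc s *\<^sub>R ([a,b,c,d]!s)) = 0"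
    using dep4[OF assms] by blast
  let ?M = "M4 [i,j,k,l] [a,b,c,d]"
  let ?v = "Matrix.vec 4 cc"
  have car: "?M \<in> carrier_mat 4 4" by (simp add: M4_def)
  have "?v \<noteq> 0\<^sub>v 4"
  proof
    assume h: "?v = 0\<^sub>v 4"
    obtain s where "s < 4" "cc s \<noteq> 0" using cc by auto
    then have "vec_index ?v s \<noteq> 0" by simp
    then show False using h \<open>s<4\<close> by simp
  qed
  moreover have "?M *\<^sub>v ?v = 0\<^sub>v 4"
  proof (rule eq_vecI)
    show "dim_vec (?M *\<^sub>v ?v) = dim_vec (0\<^sub>v 4)" by (simp add: M4_def)
    fix r assume "r < dim_vec (0\<^sub>v 4)"
    then have r: "r < 4" by simp
    have "vec_index (?M *\<^sub>v ?v) r = (\<Sum>s<4. vec_nth ([a,b,c,d]!s) (idx7 ([i,j,k,l]!r)) * cc s)"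
      using r by (simp add: M4_def scalar_prod_def atLeast0LessThan)
    also have "\<dots> = vec_nth (\<Sum>s<4. cc s *\<^sub>R ([a,b,c,d]!s)) (idx7 ([i,j,k,l]!r))"
      by (simp add: mult.commute)
    also have "\<dots> = 0" using cc(2) by simp
    finally show "vec_index (?M *\<^sub>v ?v) r = vec_index (0\<^sub>v 4) r" using r by simp
  qed
  ultimately have "Determinant.det ?M = 0"
    using det_0_iff_vec_prod_zero[OF car] vec_carrier[of 4 cc] by blast
  then show ?thesis by (simp add: e4_det)
qed


lemma det_col_lin:
  assumes V: "length V = 4" and q: "q < 4"
  shows "Determinant.det (M4 I (V[q:=x])) =
    (\<Sum>r<4. vec_nth x (idx7 (I!r)) * cofactor (M4 I (V[q:=0])) r q)"
proof -
  have car: "M4 I (V[q:=x]) \<in> carrier_mat 4 4" by (simp add: M4_def)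
  have "Determinant.det (M4 I (V[q:=x])) = (\<Sum>r<4. M4 I (V[q:=x]) $$ (r,q) * cofactor (M4 I (V[q:=x])) r q)"
    by (rule laplace_expansion_column[OF car q])
  also have "\<dots> = (\<Sum>r<4. vec_nth x (idx7 (I!r)) * cofactor (M4 I (V[q:=0])) r q)"
  proof (rule sum.cong[OF refl])
    fix r assume r: "r \<in> {..<4::nat}"
    have e1: "M4 I (V[q:=x]) $$ (r,q) = vec_nth x (idx7 (I!r))"
      using r q V by (simp add: M4_def)
    have "mat_delete (M4 I (V[q:=x])) r q = mat_delete (M4 I (V[q:=0])) r q"
    proof (rule eq_matI)
      fix i' j' assume "i' < dim_row (mat_delete (M4 I (V[q:=0])) r q)"
        "j' < dim_col (mat_delete (M4 I (V[q:=0])) r q)"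
      then have ij: "i' < 3" "j' < 3" by (simp_all add: M4_def)
      let ?i = "if i' < r then i' else Suc i'" and ?j = "if j' < q then j' else Suc j'"
      have "?i < 4" "?j < 4" "?j \<noteq> q" using ij by auto
      then show "mat_delete (M4 I (V[q:=x])) r q $$ (i', j') = mat_delete (M4 I (V[q:=0])) r q $$ (i', j')"
        using ij by (simp add: mat_delete_def M4_def)
    qed (simp_all add: M4_def)
    then have "cofactor (M4 I (V[q:=x])) r q = cofactor (M4 I (V[q:=0])) r q"
      by (simp add: cofactor_def)
    then show "M4 I (V[q:=x]) $$ (r,q) * cofactor (M4 I (V[q:=x])) r q =
       vec_nth x (idx7 (I!r)) * cofactor (M4 I (V[q:=0])) r q" using e1 by simp
  qed
  finally show ?thesis .
qed

lemma axis_delta: "(\<Sum>t\<in>UNIV. vec_nth x t * vec_nth (axis t (1::real)) y) = vec_nth x (y::'n::finite)"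
proof -
  have "(\<Sum>t\<in>UNIV. vec_nth x t * vec_nth (axis t (1::real)) y) = (\<Sum>t\<in>UNIV. if t = y then vec_nth x t else 0)"
    by (rule sum.cong) (auto simp: axis_def)
  then show ?thesis by simp
qed

lemma det_lin:
  assumes V: "length V = 4" and q: "q < 4"
  shows "Determinant.det (M4 I (V[q:=x])) =
    (\<Sum>t\<in>UNIV. vec_nth x t * Determinant.det (M4 I (V[q:=axis t 1])))"
proof -
  let ?C = "\<lambda>r. cofactor (M4 I (V[q:=0])) r q"
  have "(\<Sum>t\<in>UNIV. vec_nth x t * Determinant.det (M4 I (V[q:=axis t 1])))
      = (\<Sum>t\<in>UNIV. vec_nth x t * (\<Sum>r<4. vec_nth (axis t 1) (idx7 (I!r)) * ?C r))"
    by (simp add: det_col_lin[OF V q])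
  also have "\<dots> = (\<Sum>r<4. (\<Sum>t\<in>UNIV. vec_nth x t * vec_nth (axis t 1) (idx7 (I!r))) * ?C r)"
    by (simp add: sum_distrib_left sum_distrib_right sum.swap[of _ UNIV] mult.assoc)
  also have "\<dots> = (\<Sum>r<4. vec_nth x (idx7 (I!r)) * ?C r)"
    by (simp add: axis_delta)
  finally show ?thesis by (simp add: det_col_lin[OF V q])
qed

lemma e4_lin4: "e4 i j k l a b c d = (\<Sum>t\<in>UNIV. vec_nth d t * e4 i j k l a b c (axis t 1))"
  using det_lin[of "[a,b,c,0]" 3 "[i,j,k,l]" d] by (simp add: e4_det)

lemma e4_lin3: "e4 i j k l a b c d = (\<Sum>t\<in>UNIV. vec_nth c t * e4 i j k l a b (axis t 1) d)"
  using det_lin[of "[a,b,0,d]" 2 "[i,j,k,l]" c] by (simp add: e4_det)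

lemma psi_lin4: "psi a b c d = (\<Sum>t\<in>UNIV. vec_nth d t * psi a b c (axis t 1))"
  unfolding psi_def
  apply (simp only: right_diff_distrib sum_subtractf)
  apply (subst (1 2 3 4 5 6 7) e4_lin4)
  apply (rule refl)
  done

lemma psi_lin3: "psi a b c d = (\<Sum>t\<in>UNIV. vec_nth c t * psi a b (axis t 1) d)"
  unfolding psi_def
  apply (simp only: right_diff_distrib sum_subtractf)
  apply (subst (1 2 3 4 5 6 7) e4_lin3)
  apply (rule refl)
  done


lemma psi_bilin: "psi w z u v = (\<Sum>s\<in>UNIV. \<Sum>t\<in>UNIV. vec_nth u s * vec_nth v t * psi w z (axis s 1) (axis t 1))"
  apply (subst psi_lin3)
  apply (subst psi_lin4)
  apply (simp add: sum_distrib_left mult.assoc)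
  done

lemma pair: "inner2 (wedge2 u v) (Psi2 w z) = psi w z u v - psi w z v u"
proof -
  define F where "F s t = vec_nth u s * vec_nth v t * psi w z (axis s 1) (axis t 1) - vec_nth v s * vec_nth u t * psi w z (axis s 1) (axis t 1)" for s t
  have "inner2 (wedge2 u v) (Psi2 w z) = (\<Sum>i\<in>{1..7}. \<Sum>j\<in>{1..7}. F (idx7 i) (idx7 j))"
    unfolding inner2_def wedge2_def Psi2_def ebasis_def F_def inner_axis
    by (simp add: algebra_simps)
  also have "\<dots> = (\<Sum>i\<in>{1..7}. \<Sum>t\<in>UNIV. F (idx7 i) t)"
    by (rule sum.cong[OF refl], rule sum7)
  also have "\<dots> = (\<Sum>s\<in>UNIV. \<Sum>t\<in>UNIV. F s t)"
    by (rule sum7)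
  also have "\<dots> = psi w z u v - psi w z v u"
    by (simp only: F_def psi_bilin[of w z u v] psi_bilin[of w z v u] sum_subtractf)
  finally show ?thesis .
qed


lemma module_scale2: "Modules.module scale2"
  by unfold_locales (auto simp: scale2_def fun_eq_iff algebra_simps)

lemma inner2_left: "inner2 (scale2 c x + y) Y = c * inner2 x Y + inner2 y Y"
  by (simp add: inner2_def scale2_def algebra_simps sum.distrib sum_distrib_left)

lemma inner2_right: "inner2 X (scale2 c x + y) = c * inner2 X x + inner2 X y"
  by (simp add: inner2_def scale2_def algebra_simps sum.distrib sum_distrib_left)

lemma inner2_zero_left: "inner2 0 Y = 0" by (simp add: inner2_def)
lemma inner2_zero_right: "inner2 X 0 = 0" by (simp add: inner2_def)

theorem lemma4p4:
  fixes P :: "(real ^ 7) set"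
  assumes "subspace P" and "dim P = 3"
  shows "\<forall>X\<in>Lambda2 P. \<forall>Y\<in>PsiSpan P. inner2 X Y = 0"
proof -
  have pv: "inner2 (wedge2 u v) (Psi2 w z) = 0" if "u \<in> P" "v \<in> P" "w \<in> P" "z \<in> P" for u v w z
  proof -
    have "psi w z u v = 0" "psi w z v u = 0"
      unfolding psi_def using e4_zero[OF assms] that by simp_all
    then show ?thesis by (simp add: pair)
  qed
  have one: "inner2 (wedge2 u v) Y = 0" if "u \<in> P" "v \<in> P" "Y \<in> PsiSpan P" for u v Y
  proof -
    have "Y \<in> module.span scale2 {Psi2 u v | u v. u \<in> P \<and> v \<in> P}"
      using that(3) by (simp add: PsiSpan_def)
    then show ?thesis
    proof (rule module.span_induct_alt[OF module_scale2, where h="\<lambda>Y. inner2 (wedge2 u v) Y = 0"])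
      show "inner2 (wedge2 u v) 0 = 0" by (simp add: inner2_zero_right)
    next
      fix c x y assume "x \<in> {Psi2 u v | u v. u \<in> P \<and> v \<in> P}" "inner2 (wedge2 u v) y = 0"
      then show "inner2 (wedge2 u v) (scale2 c x + y) = 0" using pv that(1,2) by (auto simp: inner2_right)
    qed
  qed
  show ?thesis
  proof
    fix X assume "X \<in> Lambda2 P"
    then have "X \<in> module.span scale2 {wedge2 u v | u v. u \<in> P \<and> v \<in> P}"
      by (simp add: Lambda2_def)
    then show "\<forall>Y\<in>PsiSpan P. inner2 X Y = 0"
    proof (rule module.span_induct_alt[OF module_scale2, where h="\<lambda>X. \<forall>Y\<in>PsiSpan P. inner2 X Y = 0"])
      show "\<forall>Y\<in>PsiSpan P. inner2 0 Y = 0" by (simp add: inner2_zero_left)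
    next
      fix c x y assume "x \<in> {wedge2 u v | u v. u \<in> P \<and> v \<in> P}" "\<forall>Y\<in>PsiSpan P. inner2 y Y = 0"
      then show "\<forall>Y\<in>PsiSpan P. inner2 (scale2 c x + y) Y = 0" using one by (auto simp: inner2_left)
    qed
  qed
qed

end
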